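(* Let $\mathcal{R}$ be a left-connected rewriting system over a signature $\Sigma$, let $L_1\xleftarrow{[i_1,o_1]}K_1\to R_1$ and $L_2\xleftarrow{[i_2,o_2]}K_2\to R_2$ be rules of $\mathcal{R}$, and let $(g_1,g_2\colon G\to L_1+L_2)$ be a gluing scheme yielding a pre-critical pair, with gluing $\epsilon\colon L_1+L_2\twoheadrightarrow S=\mathtt{coeq}(g_1,g_2)$ and interface $in(S)+out(S)\xrightarrow{[\subseteq,\subseteq]}S$. This pre-critical pair is parallel if and only if both of the following hold: (1) no hyperedge of $L_1$ is glued to a hyperedge of $L_2$; and (2) whenever a node $v_1$ of $L_1$ and a node $v_2$ of $L_2$ are glued, $v_1$ lies in the interface of $L_1$ (the image of $[i_1,o_1]$, i.e. $in(L_1)\cup out(L_1)$) and $v_2$ lies in the interface of $L_2$ (the image of $[i_2,o_2]$).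
   Context: A signature $\Sigma$ is a set of triples $(x,n,m)$ (label, arity, coarity). A $\Sigma$-hypergraph $G=(V,E,s,t,l)$ has finite sets $V$ (nodes), $E$ (hyperedges), maps $s,t\colon E\to V^*$ (lists of sources/targets) and a labelling $l\colon E\to\Sigma$ sending a hyperedge with $n$ sources and $m$ targets to some $(x,n,m)$. Morphisms preserve sources, targets and labels; they form the category $\mathbf{Hyp}_\Sigma$, where colimits are computed componentwise and monos/epis are injective/surjective on nodes and hyperedges. Composition is written $f;g$; $\iota_1,\iota_2$ are coprojections. A hypergraph is discrete if it has no hyperedges. A path is a list of hyperedges $[e_1,\dots,e_n]$ with some target of $e_k$ equal to a source of $e_{k+1}$ for each $k$; it goes from $v$ to $v'$ if $v$ is a source of $e_1$ and $v'$ a target of $e_n$; a cycle is a path with some source of $e_1$ a target of $e_n$. In-degree (out-degree) of a node $v$: number of pairs $(e,i)$ with $v$ the $i$-th target (source) of $e$; $in(H)$, $out(H)$: nodes of in-degree $0$, out-degree $0$. $H$ is ma (monogamous acyclic) if it has no cycle and all in- and out-degrees are $\le 1$. A cospan $I\to H\leftarrow O$ with $I,O$ discrete is an ma-cospan if $H$ is ma and the legs are mono with images $in(H)$ and $out(H)$. $H$ is strongly connected if for all $x\in in(H)$, $y\in out(H)$ there is a path from $x$ to $y$. A left-connected rule is a span $L\xleftarrow{[i_L,o_L]}K=I+O\xrightarrow{[i_R,o_R]}R$ with $I,O$ discrete, $I\to L\leftarrow O$ and $I\to R\leftarrow O$ ma-cospans, $[i_L,o_L]$ mono and $L$ strongly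 connected; a left-connected rewriting system is a finite set of such rules. A convex match is a mono $m\colon L\to G$ such that every path in $G$ between two nodes of $m(L)$ has all its hyperedges in $m(L)$. A derivation between ma-cospans $n\to G\leftarrow m$ and $n\to H\leftarrow m$ via a rule $L\leftarrow K\to R$ is given by a convex match $L\to G$, a hypergraph $C$ and a diagram $G\leftarrow C\to H$, $K\to C$, $R\to H$, $n+m\to C$ in which $K,L,C,G$ and $K,R,C,H$ are pushout squares (the left one a boundary complement, automatic for left-connected systems) and everything commutes with the interfaces; for left-connected systems mono matches are automatically convex and pushout complements exist uniquely. A pre-critical pair consists of two derivations, via rules $L_1\leftarrow K_1\to R_1$ and $L_2\leftarrow K_2\to R_2$ with pushout complements $C_1, C_2$, from a common ma-cospan $n\to S\leftarrow m$ with matches $m_1,m_2$ such that $[m_1,m_2]\colon L_1+L_2\to S$ is epi. It is parallel if there exist morphisms $g_1\colon L_1\to C_2$ and $g_2\colon L_2\to C_1$ such that $g_1$ followed by $C_2\to S$ equals $m_1$ and $g_2$ followed by $C_1\to S$ equals $m_2$. A gluing scheme for $L_1,L_2$ is a $\Sigma$-hypergraph $G$ with morphisms $g_1,g_2\colon G\to L_1+L_2$; its gluing is the coequaliser $\epsilon\colon L_1+L_2\to S=\mathtt{coeq}(g_1,g_2)$. Two nodes (or hyperedges) $x,x'$ of $L_1+L_2$ are glued if some node (hyperedge) $y$ of $G$ has $g_1(y)=x$, $g_2(y)=x'$. The gluing scheme yields a pre-critical pair if $\iota_1;\epsilon$ and $\iota_2;\epsilon$ are mono and $in(S)\xrightarrow{\subseteq}S\xleftarrow{\subseteq}out(S)$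 is an ma-cospan; the pre-critical pair is then formed by the (unique) derivations from this ma-cospan with matches $\iota_1;\epsilon$ and $\iota_2;\epsilon$. *)

theory Defs
  imports Main
begin

(* A hypergraph with node type 'v, hyperedge type 'e and labels of type 'l.
   The signature is a set of triples (label, arity, coarity). *)
record ('v, 'e, 'l) hyp =
  nodes :: "'v set"
  edges :: "'e set"
  src   :: "'e \<Rightarrow> 'v list"
  tgt   :: "'e \<Rightarrow> 'v list"
  lab   :: "'e \<Rightarrow> 'l"

type_synonym ('l) signature = "('l \<times> nat \<times> nat) set"

definition hyp_wf :: "'l signature \<Rightarrow> ('v, 'e, 'l) hyp \<Rightarrow> bool" where
  "hyp_wf \<Sigma> G \<longleftrightarrow> finite (nodes G) \<and> finite (edges G) \<and>
     (\<forall>e\<in>edges G. set (src G e) \<subseteq> nodes G \<and> set (tgt G e) \<subseteq> nodes G \<and>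
        (lab G e, length (src G e), length (tgt G e)) \<in> \<Sigma>)"

definition discrete :: "('v, 'e, 'l) hyp \<Rightarrow> bool" where
  "discrete G \<longleftrightarrow> edges G = {}"

definition discrete_on :: "'v set \<Rightarrow> ('v, 'e, 'l) hyp" where
  "discrete_on V = \<lparr>nodes = V, edges = {}, src = (\<lambda>_. []), tgt = (\<lambda>_. []), lab = (\<lambda>_. undefined)\<rparr>"

type_synonym ('v, 'e, 'w, 'f) hmor = "('v \<Rightarrow> 'w) \<times> ('e \<Rightarrow> 'f)"

definition morph :: "('v, 'e, 'l) hyp \<Rightarrow> ('w, 'f, 'l) hyp \<Rightarrow> ('v, 'e, 'w, 'f) hmor \<Rightarrow> bool" where
  "morph G H f \<longleftrightarrow> fst f ` nodes G \<subseteq> nodes H \<and> snd f ` edges G \<subseteq> edges H \<and>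
     (\<forall>e\<in>edges G. src H (snd f e) = map (fst f) (src G e) \<and>
                   tgt H (snd f e) = map (fst f) (tgt G e) \<and>
                   lab H (snd f e) = lab G e)"

(* diagrammatic composition f;g *)
definition hcomp :: "('v, 'e, 'w, 'f) hmor \<Rightarrow> ('w, 'f, 'x, 'y) hmor \<Rightarrow> ('v, 'e, 'x, 'y) hmor" where
  "hcomp f g = (fst g \<circ> fst f, snd g \<circ> snd f)"

definition hid :: "('v, 'e, 'v, 'e) hmor" where
  "hid = (id, id)"

(* equality of morphisms with domain G (only values on G matter) *)
definition hm_eq_on :: "('v, 'e, 'l) hyp \<Rightarrow> ('v, 'e, 'w, 'f) hmor \<Rightarrow> ('v, 'e, 'w, 'f) hmor \<Rightarrow> bool" where
  "hm_eq_on G f g \<longleftrightarrow> (\<forall>v\<in>nodes G. fst f v = fst g v) \<and> (\<forall>e\<in>edges G. snd f e = snd g e)"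

definition mono :: "('v, 'e, 'l) hyp \<Rightarrow> ('v, 'e, 'w, 'f) hmor \<Rightarrow> bool" where
  "mono G f \<longleftrightarrow> inj_on (fst f) (nodes G) \<and> inj_on (snd f) (edges G)"

definition hsum :: "('v1, 'e1, 'l) hyp \<Rightarrow> ('v2, 'e2, 'l) hyp \<Rightarrow> ('v1 + 'v2, 'e1 + 'e2, 'l) hyp" where
  "hsum G H = \<lparr>nodes = nodes G <+> nodes H, edges = edges G <+> edges H,
     src = case_sum (map Inl \<circ> src G) (map Inr \<circ> src H),
     tgt = case_sum (map Inl \<circ> tgt G) (map Inr \<circ> tgt H),
     lab = case_sum (lab G) (lab H)\<rparr>"

definition inj1 :: "('v1, 'e1, 'v1 + 'v2, 'e1 + 'e2) hmor" where
  "inj1 = (Inl, Inl)"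

definition inj2 :: "('v2, 'e2, 'v1 + 'v2, 'e1 + 'e2) hmor" where
  "inj2 = (Inr, Inr)"

definition copair :: "('v1, 'e1, 'w, 'f) hmor \<Rightarrow> ('v2, 'e2, 'w, 'f) hmor \<Rightarrow> ('v1 + 'v2, 'e1 + 'e2, 'w, 'f) hmor" where
  "copair f g = (case_sum (fst f) (fst g), case_sum (snd f) (snd g))"

section \<open>Colimits (computed componentwise, as in Set)\<close>

(* D with p : B \<rightarrow> D, q : C \<rightarrow> D is a pushout of f : A \<rightarrow> B, g : A \<rightarrow> C in Set:
   the square commutes, [p,q] is onto D, and its kernel is the equivalence
   relation on B + C generated by Inl (f a) ~ Inr (g a). *)
definition set_pushout :: "'a set \<Rightarrow> 'b set \<Rightarrow> 'c set \<Rightarrow> 'd set \<Rightarrow>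
    ('a \<Rightarrow> 'b) \<Rightarrow> ('a \<Rightarrow> 'c) \<Rightarrow> ('b \<Rightarrow> 'd) \<Rightarrow> ('c \<Rightarrow> 'd) \<Rightarrow> bool" where
  "set_pushout A B C D f g p q \<longleftrightarrow>
     (\<forall>a\<in>A. p (f a) = q (g a)) \<and> D = p ` B \<union> q ` C \<and>
     (let R = {(Inl (f a), Inr (g a)) | a. a \<in> A} in
       \<forall>x\<in>B <+> C. \<forall>y\<in>B <+> C. (case_sum p q x = case_sum p q y \<longleftrightarrow> (x, y) \<in> (R \<union> R\<inverse>)\<^sup>*))"

definition hpushout :: "('a, 'ae, 'l) hyp \<Rightarrow> ('b, 'be, 'l) hyp \<Rightarrow> ('c, 'ce, 'l) hyp \<Rightarrow> ('d, 'de, 'l) hyp \<Rightarrow>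
    ('a, 'ae, 'b, 'be) hmor \<Rightarrow> ('b, 'be, 'd, 'de) hmor \<Rightarrow> ('a, 'ae, 'c, 'ce) hmor \<Rightarrow> ('c, 'ce, 'd, 'de) hmor \<Rightarrow> bool" where
  "hpushout K L C G f m k c \<longleftrightarrow>
     morph K L f \<and> morph L G m \<and> morph K C k \<and> morph C G c \<and>
     set_pushout (nodes K) (nodes L) (nodes C) (nodes G) (fst f) (fst k) (fst m) (fst c) \<and>
     set_pushout (edges K) (edges L) (edges C) (edges G) (snd f) (snd k) (snd m) (snd c)"

definition set_coeq :: "'a set \<Rightarrow> 'b set \<Rightarrow> 'd set \<Rightarrow> ('a \<Rightarrow> 'b) \<Rightarrow> ('a \<Rightarrow> 'b) \<Rightarrow> ('b \<Rightarrow> 'd) \<Rightarrow> bool" where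
  "set_coeq A B D g1 g2 e \<longleftrightarrow> e ` B = D \<and>
     (let R = {(g1 a, g2 a) | a. a \<in> A} in
       \<forall>x\<in>B. \<forall>y\<in>B. (e x = e y \<longleftrightarrow> (x, y) \<in> (R \<union> R\<inverse>)\<^sup>*))"

definition hcoeq :: "('a, 'ae, 'l) hyp \<Rightarrow> ('b, 'be, 'l) hyp \<Rightarrow> ('d, 'de, 'l) hyp \<Rightarrow>
    ('a, 'ae, 'b, 'be) hmor \<Rightarrow> ('a, 'ae, 'b, 'be) hmor \<Rightarrow> ('b, 'be, 'd, 'de) hmor \<Rightarrow> bool" where
  "hcoeq G H S g1 g2 eps \<longleftrightarrow> morph G H g1 \<and> morph G H g2 \<and> morph H S eps \<and>
     set_coeq (nodes G) (nodes H) (nodes S) (fst g1) (fst g2) (fst eps) \<and>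
     set_coeq (edges G) (edges H) (edges S) (snd g1) (snd g2) (snd eps)"

definition indeg :: "('v, 'e, 'l) hyp \<Rightarrow> 'v \<Rightarrow> nat" where
  "indeg H v = card {(e, i). e \<in> edges H \<and> i < length (tgt H e) \<and> tgt H e ! i = v}"

definition outdeg :: "('v, 'e, 'l) hyp \<Rightarrow> 'v \<Rightarrow> nat" where
  "outdeg H v = card {(e, i). e \<in> edges H \<and> i < length (src H e) \<and> src H e ! i = v}"

definition in_nodes :: "('v, 'e, 'l) hyp \<Rightarrow> 'v set" where
  "in_nodes H = {v \<in> nodes H. indeg H v = 0}"

definition out_nodes :: "('v, 'e, 'l) hyp \<Rightarrow> 'v set" where
  "out_nodes H = {v \<in> nodes H. outdeg H v = 0}"

definition is_path :: "('v, 'e, 'l) hyp \<Rightarrow> 'e list \<Rightarrow> bool" where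
  "is_path H p \<longleftrightarrow> p \<noteq> [] \<and> set p \<subseteq> edges H \<and>
     (\<forall>k. Suc k < length p \<longrightarrow> set (tgt H (p ! k)) \<inter> set (src H (p ! Suc k)) \<noteq> {})"

definition path_from :: "('v, 'e, 'l) hyp \<Rightarrow> 'e list \<Rightarrow> 'v \<Rightarrow> 'v \<Rightarrow> bool" where
  "path_from H p v v' \<longleftrightarrow> is_path H p \<and> v \<in> set (src H (hd p)) \<and> v' \<in> set (tgt H (last p))"

definition is_cycle :: "('v, 'e, 'l) hyp \<Rightarrow> 'e list \<Rightarrow> bool" where
  "is_cycle H p \<longleftrightarrow> is_path H p \<and> set (src H (hd p)) \<inter> set (tgt H (last p)) \<noteq> {}"

definition ma_hyp :: "('v, 'e, 'l) hyp \<Rightarrow> bool" where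
  "ma_hyp H \<longleftrightarrow> (\<nexists>p. is_cycle H p) \<and> (\<forall>v\<in>nodes H. indeg H v \<le> 1 \<and> outdeg H v \<le> 1)"

definition ma_cospan :: "('a, 'ae, 'l) hyp \<Rightarrow> ('a, 'ae, 'v, 'e) hmor \<Rightarrow> ('v, 'e, 'l) hyp \<Rightarrow>
    ('b, 'be, 'v, 'e) hmor \<Rightarrow> ('b, 'be, 'l) hyp \<Rightarrow> bool" where
  "ma_cospan In i H ou Out \<longleftrightarrow> discrete In \<and> discrete Out \<and> ma_hyp H \<and>
     morph In H i \<and> morph Out H ou \<and> mono In i \<and> mono Out ou \<and>
     fst i ` nodes In = in_nodes H \<and> fst ou ` nodes Out = out_nodes H"

definition strongly_connected :: "('v, 'e, 'l) hyp \<Rightarrow> bool" where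
  "strongly_connected H \<longleftrightarrow> (\<forall>x\<in>in_nodes H. \<forall>y\<in>out_nodes H. \<exists>p. path_from H p x y)"

(* L <-[iL,oL]- I + O -[iR,oR]-> R *)
record ('v, 'e, 'l) rule =
  rL  :: "('v, 'e, 'l) hyp"
  rI  :: "('v, 'e, 'l) hyp"
  rO  :: "('v, 'e, 'l) hyp"
  riL :: "('v, 'e, 'v, 'e) hmor"
  roL :: "('v, 'e, 'v, 'e) hmor"
  rR  :: "('v, 'e, 'l) hyp"
  riR :: "('v, 'e, 'v, 'e) hmor"
  roR :: "('v, 'e, 'v, 'e) hmor"

definition rK :: "('v, 'e, 'l) rule \<Rightarrow> ('v + 'v, 'e + 'e, 'l) hyp" where
  "rK r = hsum (rI r) (rO r)"

definition left_connected_rule :: "'l signature \<Rightarrow> ('v, 'e, 'l) rule \<Rightarrow> bool" where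
  "left_connected_rule \<Sigma> r \<longleftrightarrow>
     hyp_wf \<Sigma> (rL r) \<and> hyp_wf \<Sigma> (rI r) \<and> hyp_wf \<Sigma> (rO r) \<and> hyp_wf \<Sigma> (rR r) \<and>
     discrete (rI r) \<and> discrete (rO r) \<and>
     ma_cospan (rI r) (riL r) (rL r) (roL r) (rO r) \<and>
     ma_cospan (rI r) (riR r) (rR r) (roR r) (rO r) \<and>
     mono (rK r) (copair (riL r) (roL r)) \<and>
     strongly_connected (rL r)"

definition left_connected_system :: "'l signature \<Rightarrow> ('v, 'e, 'l) rule set \<Rightarrow> bool" where
  "left_connected_system \<Sigma> Rs \<longleftrightarrow> finite Rs \<and> (\<forall>r\<in>Rs. left_connected_rule \<Sigma> r)"

definition interface :: "('v, 'e, 'l) rule \<Rightarrow> 'v set" where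
  "interface r = fst (riL r) ` nodes (rI r) \<union> fst (roL r) ` nodes (rO r)"

(* C with k : K \<rightarrow> C, c : C \<rightarrow> S is the pushout complement of K -> L -m-> S
   occurring in a derivation from the ma-cospan in(S) \<rightarrow> S \<leftarrow> out(S):
   K,L,C,S is a pushout square and the interface in(S)+out(S) factors through C. *)
definition deriv_complement :: "'l signature \<Rightarrow> ('v, 'e, 'l) rule \<Rightarrow> ('w, 'f, 'l) hyp \<Rightarrow>
    ('v, 'e, 'w, 'f) hmor \<Rightarrow> ('w, 'f, 'l) hyp \<Rightarrow> ('v + 'v, 'e + 'e, 'w, 'f) hmor \<Rightarrow> ('w, 'f, 'w, 'f) hmor \<Rightarrow> bool" where
  "deriv_complement \<Sigma> r S m C k c \<longleftrightarrow>
     hyp_wf \<Sigma> C \<and>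
     hpushout (rK r) (rL r) C S (copair (riL r) (roL r)) m k c \<and>
     (let Bd = hsum (discrete_on (in_nodes S) :: ('w, 'f, 'l) hyp) (discrete_on (out_nodes S) :: ('w, 'f, 'l) hyp) in
      \<exists>b. morph Bd C b \<and> hm_eq_on Bd (hcomp b c) (copair hid hid))"

definition parallel_pcp :: "'l signature \<Rightarrow> ('v, 'e, 'l) rule \<Rightarrow> ('v, 'e, 'l) rule \<Rightarrow> ('w, 'f, 'l) hyp \<Rightarrow>
    ('v, 'e, 'w, 'f) hmor \<Rightarrow> ('v, 'e, 'w, 'f) hmor \<Rightarrow> bool" where
  "parallel_pcp \<Sigma> r1 r2 S m1 m2 \<longleftrightarrow>
     (\<exists>C1 k1 c1 C2 k2 c2 h1 h2.
        deriv_complement \<Sigma> r1 S m1 C1 k1 c1 \<and> deriv_complement \<Sigma> r2 S m2 C2 k2 c2 \<and>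
        morph (rL r1) C2 h1 \<and> hm_eq_on (rL r1) (hcomp h1 c2) m1 \<and>
        morph (rL r2) C1 h2 \<and> hm_eq_on (rL r2) (hcomp h2 c1) m2)"

definition glued_nodes :: "('a, 'ae, 'l) hyp \<Rightarrow> ('a, 'ae, 'b, 'be) hmor \<Rightarrow> ('a, 'ae, 'b, 'be) hmor \<Rightarrow> 'b \<Rightarrow> 'b \<Rightarrow> bool" where
  "glued_nodes G g1 g2 x x' \<longleftrightarrow> (\<exists>y\<in>nodes G. fst g1 y = x \<and> fst g2 y = x')"

definition glued_edges :: "('a, 'ae, 'l) hyp \<Rightarrow> ('a, 'ae, 'b, 'be) hmor \<Rightarrow> ('a, 'ae, 'b, 'be) hmor \<Rightarrow> 'be \<Rightarrow> 'be \<Rightarrow> bool" where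
  "glued_edges G g1 g2 x x' \<longleftrightarrow> (\<exists>y\<in>edges G. snd g1 y = x \<and> snd g2 y = x')"

end

theory Submission imports Defs begin

definition Cc :: "('v,'e,'l) rule \<Rightarrow> ('w,'f,'l) hyp \<Rightarrow> ('v,'e,'w,'f) hmor \<Rightarrow> ('w,'f,'l) hyp" where
"Cc r S m = S\<lparr>nodes := nodes S - fst m ` (nodes (rL r) - interface r), edges := edges S - snd m ` edges (rL r)\<rparr>"

lemma rtr_eq: "(x,y) \<in> (R \<union> R\<inverse>)\<^sup>* \<Longrightarrow> (\<forall>(a,b)\<in>R. h a = h b) \<Longrightarrow> h x = h y"
  by (induction rule: rtrancl_induct) auto

lemma rtr_escape: "(x,y) \<in> r\<^sup>* \<Longrightarrow> x \<in> A \<Longrightarrow> y \<notin> A \<Longrightarrow> \<exists>a b. (a,b) \<in> r \<and> a \<in> A \<and> b \<notin> A"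
  by (induction rule: rtrancl_induct) auto

lemma outdeg_nonempty: "outdeg H v \<noteq> 0 \<Longrightarrow> \<exists>e i. e \<in> edges H \<and> i < length (src H e) \<and> src H e ! i = v"
proof -
  assume "outdeg H v \<noteq> 0"
  hence "{(e, i). e \<in> edges H \<and> i < length (src H e) \<and> src H e ! i = v} \<noteq> {}"
    unfolding outdeg_def by (metis card.empty)
  thus ?thesis by auto
qed

lemma indeg_nonempty: "indeg H v \<noteq> 0 \<Longrightarrow> \<exists>e i. e \<in> edges H \<and> i < length (tgt H e) \<and> tgt H e ! i = v"
proof -
  assume "indeg H v \<noteq> 0"
  hence "{(e, i). e \<in> edges H \<and> i < length (tgt H e) \<and> tgt H e ! i = v} \<noteq> {}"
    unfolding indeg_def by (metis card.empty)
  thus ?thesis by auto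
qed

lemma outdeg_pos:
  assumes "finite (edges H)" "e \<in> edges H" "i < length (src H e)" "src H e ! i = v"
  shows "outdeg H v \<noteq> 0"
proof -
  let ?X = "{(e, i). e \<in> edges H \<and> i < length (src H e) \<and> src H e ! i = v}"
  have "?X \<subseteq> Sigma (edges H) (\<lambda>e. {..<length (src H e)})" by auto
  hence fin: "finite ?X" using assms(1) by (meson finite_SigmaI finite_lessThan finite_subset)
  have "(e,i) \<in> ?X" using assms by auto
  hence "?X \<noteq> {}" by blast
  thus ?thesis using fin unfolding outdeg_def card_eq_0_iff by blast
qed

lemma indeg_pos:
  assumes "finite (edges H)" "e \<in> edges H" "i < length (tgt H e)" "tgt H e ! i = v"
  shows "indeg H v \<noteq> 0"
proof -
  let ?X = "{(e, i). e \<in> edges H \<and> i < length (tgt H e) \<and> tgt H e ! i = v}"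
  have "?X \<subseteq> Sigma (edges H) (\<lambda>e. {..<length (tgt H e)})" by auto
  hence fin: "finite ?X" using assms(1) by (meson finite_SigmaI finite_lessThan finite_subset)
  have "(e,i) \<in> ?X" using assms by auto
  hence "?X \<noteq> {}" by blast
  thus ?thesis using fin unfolding indeg_def card_eq_0_iff by blast
qed

lemma outdeg_two:
  assumes "finite (edges H)" "e \<in> edges H" "i < length (src H e)" "src H e ! i = v"
    "e' \<in> edges H" "j < length (src H e')" "src H e' ! j = v" "e \<noteq> e'"
  shows "outdeg H v \<ge> 2"
proof -
  let ?X = "{(e, i). e \<in> edges H \<and> i < length (src H e) \<and> src H e ! i = v}"
  have "?X \<subseteq> Sigma (edges H) (\<lambda>e. {..<length (src H e)})" by auto
  hence fin: "finite ?X" using assms(1) by (meson finite_SigmaI finite_lessThan finite_subset)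
  have "{(e,i),(e',j)} \<subseteq> ?X" using assms by auto
  hence "card {(e,i),(e',j)} \<le> card ?X" using fin card_mono by blast
  thus ?thesis using assms(8) unfolding outdeg_def by simp
qed

lemma indeg_two:
  assumes "finite (edges H)" "e \<in> edges H" "i < length (tgt H e)" "tgt H e ! i = v"
    "e' \<in> edges H" "j < length (tgt H e')" "tgt H e' ! j = v" "e \<noteq> e'"
  shows "indeg H v \<ge> 2"
proof -
  let ?X = "{(e, i). e \<in> edges H \<and> i < length (tgt H e) \<and> tgt H e ! i = v}"
  have "?X \<subseteq> Sigma (edges H) (\<lambda>e. {..<length (tgt H e)})" by auto
  hence fin: "finite ?X" using assms(1) by (meson finite_SigmaI finite_lessThan finite_subset)
  have "{(e,i),(e',j)} \<subseteq> ?X" using assms by auto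
  hence "card {(e,i),(e',j)} \<le> card ?X" using fin card_mono by blast
  thus ?thesis using assms(8) unfolding indeg_def by simp
qed

lemma lcr_facts:
  assumes "left_connected_rule \<Sigma> r"
  shows "discrete (rI r)" "discrete (rO r)" "ma_cospan (rI r) (riL r) (rL r) (roL r) (rO r)"
    "mono (rK r) (copair (riL r) (roL r))"
  using assms unfolding left_connected_rule_def by simp_all

lemma ma_cospan_facts:
  assumes "ma_cospan In i H ou Out"
  shows "morph In H i" "morph Out H ou" "fst i ` nodes In = in_nodes H" "fst ou ` nodes Out = out_nodes H"
    "ma_hyp H"
  using assms unfolding ma_cospan_def by simp_all

lemma interface_eq:
  assumes "left_connected_rule \<Sigma> r"
  shows "interface r = in_nodes (rL r) \<union> out_nodes (rL r)"
  using ma_cospan_facts(3,4)[OF lcr_facts(3)[OF assms]] unfolding interface_def by auto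

lemma dang_src:
  assumes wfS: "hyp_wf \<Sigma> S" and maS: "ma_hyp S" and mm: "morph L S m"
    and e: "e \<in> edges S" "e \<notin> snd m ` edges L" and u: "u \<in> set (src S e)"
    and v: "v \<in> nodes L" "outdeg L v \<noteq> 0" "u = fst m v"
  shows False
proof -
  have finS: "finite (edges S)" using wfS hyp_wf_def by blast
  obtain e' i where e': "e' \<in> edges L" "i < length (src L e')" "src L e' ! i = v"
    using outdeg_nonempty[OF v(2)] by blast
  have s: "src S (snd m e') = map (fst m) (src L e')" using mm e'(1) unfolding morph_def by blast
  have me: "snd m e' \<in> edges S" using mm e'(1) unfolding morph_def by blast
  obtain j where j: "j < length (src S e)" "src S e ! j = u" using u by (meson in_set_conv_nth)
  have "outdeg S u \<ge> 2"
  proof (rule outdeg_two[OF finS e(1) j me, of i])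
    show "i < length (src S (snd m e'))" using s e' by simp
    show "src S (snd m e') ! i = u" using s e' v by simp
    show "e \<noteq> snd m e'" using e e' by blast
  qed
  moreover have "u \<in> nodes S" using wfS e u unfolding hyp_wf_def by blast
  ultimately show False using maS unfolding ma_hyp_def by fastforce
qed

lemma dang_tgt:
  assumes wfS: "hyp_wf \<Sigma> S" and maS: "ma_hyp S" and mm: "morph L S m"
    and e: "e \<in> edges S" "e \<notin> snd m ` edges L" and u: "u \<in> set (tgt S e)"
    and v: "v \<in> nodes L" "indeg L v \<noteq> 0" "u = fst m v"
  shows False
proof -
  have finS: "finite (edges S)" using wfS hyp_wf_def by blast
  obtain e' i where e': "e' \<in> edges L" "i < length (tgt L e')" "tgt L e' ! i = v"
    using indeg_nonempty[OF v(2)] by blast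
  have s: "tgt S (snd m e') = map (fst m) (tgt L e')" using mm e'(1) unfolding morph_def by blast
  have me: "snd m e' \<in> edges S" using mm e'(1) unfolding morph_def by blast
  obtain j where j: "j < length (tgt S e)" "tgt S e ! j = u" using u by (meson in_set_conv_nth)
  have "indeg S u \<ge> 2"
  proof (rule indeg_two[OF finS e(1) j me, of i])
    show "i < length (tgt S (snd m e'))" using s e' by simp
    show "tgt S (snd m e') ! i = u" using s e' v by simp
    show "e \<noteq> snd m e'" using e e' by blast
  qed
  moreover have "u \<in> nodes S" using wfS e u unfolding hyp_wf_def by blast
  ultimately show False using maS unfolding ma_hyp_def by fastforce
qed

lemma case_sum_image_Plus: "case_sum f g ` (A <+> B) = f ` A \<union> g ` B"
  by (simp add: Plus_def image_Un image_image)

lemma set_pushout_emptyA: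
  "set_pushout {} B C D f g p q \<longleftrightarrow> D = p ` B \<union> q ` C \<and> inj_on (case_sum p q) (B <+> C)"
proof -
  have "{(Inl (f a), Inr (g a)) | a. a \<in> {}} = {}" by simp
  hence E: "({(Inl (f a), Inr (g a)) | a. a \<in> {}} \<union> {(Inl (f a), Inr (g a)) | a. a \<in> {}}\<inverse>)\<^sup>* = Id" by simp
  show ?thesis unfolding set_pushout_def Let_def E inj_on_def by blast
qed

lemma complement:
  fixes r :: "('v,'e,'l) rule" and S :: "('w,'f,'l) hyp" and m :: "('v,'e,'w,'f) hmor"
  assumes lc: "left_connected_rule \<Sigma> r" and wfS: "hyp_wf \<Sigma> S" and maS: "ma_hyp S"
    and mm: "morph (rL r) S m" and mo: "mono (rL r) m"
  shows "deriv_complement \<Sigma> r S m (Cc r S m) (hcomp (copair (riL r) (roL r)) m) hid"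
proof -
  have iface: "interface r = in_nodes (rL r) \<union> out_nodes (rL r)" using interface_eq[OF lc] .
  have injn: "inj_on (fst m) (nodes (rL r))" and inje: "inj_on (snd m) (edges (rL r))"
    using mo unfolding Defs.mono_def by auto
  have nif: "outdeg (rL r) v \<noteq> 0" "indeg (rL r) v \<noteq> 0"
    if "v \<in> nodes (rL r)" "v \<notin> interface r" for v
    using that iface unfolding out_nodes_def in_nodes_def by auto
  let ?C = "Cc r S m" and ?f = "copair (riL r) (roL r)"
  let ?k = "hcomp ?f m"
  have C_simps: "nodes ?C = nodes S - fst m ` (nodes (rL r) - interface r)"
    "edges ?C = edges S - snd m ` edges (rL r)" "src ?C = src S" "tgt ?C = tgt S" "lab ?C = lab S"
    by (simp_all add: Cc_def)
  have discI: "edges (rI r) = {}" and discO: "edges (rO r) = {}"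
    using lcr_facts(1,2)[OF lc] unfolding discrete_def by auto
  have mI: "morph (rI r) (rL r) (riL r)" and mO: "morph (rO r) (rL r) (roL r)"
    using ma_cospan_facts(1,2)[OF lcr_facts(3)[OF lc]] by auto
  have Kn: "nodes (rK r) = nodes (rI r) <+> nodes (rO r)" and Ke: "edges (rK r) = {}"
    using discI discO by (auto simp: rK_def hsum_def)
  have ifL: "interface r \<subseteq> nodes (rL r)" using iface unfolding in_nodes_def out_nodes_def by auto
  have fimg: "fst ?f ` nodes (rK r) = interface r"
    unfolding Kn interface_def copair_def fst_conv case_sum_image_Plus ..
  have mLS: "fst m ` nodes (rL r) \<subseteq> nodes S" "snd m ` edges (rL r) \<subseteq> edges S"
    using mm unfolding morph_def by auto
  have wfC: "hyp_wf \<Sigma> ?C"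
  proof -
    have fin: "finite (nodes S)" "finite (edges S)" using wfS hyp_wf_def by auto
    have srcC: "set (src S e) \<subseteq> nodes ?C" if e: "e \<in> edges ?C" for e
    proof
      fix u assume u: "u \<in> set (src S e)"
      have eS: "e \<in> edges S" "e \<notin> snd m ` edges (rL r)" using e unfolding C_simps by auto
      have "u \<in> nodes S" using wfS eS u unfolding hyp_wf_def by blast
      moreover have "u \<notin> fst m ` (nodes (rL r) - interface r)"
      proof
        assume "u \<in> fst m ` (nodes (rL r) - interface r)"
        then obtain v where "v \<in> nodes (rL r)" "v \<notin> interface r" "u = fst m v" by blast
        thus False using dang_src[OF wfS maS mm eS u] nif by blast
      qed
      ultimately show "u \<in> nodes ?C" unfolding C_simps by blast
    qed
    have tgtC: "set (tgt S e) \<subseteq> nodes ?C" if e: "e \<in> edges ?C" for e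
    proof
      fix u assume u: "u \<in> set (tgt S e)"
      have eS: "e \<in> edges S" "e \<notin> snd m ` edges (rL r)" using e unfolding C_simps by auto
      have "u \<in> nodes S" using wfS eS u unfolding hyp_wf_def by blast
      moreover have "u \<notin> fst m ` (nodes (rL r) - interface r)"
      proof
        assume "u \<in> fst m ` (nodes (rL r) - interface r)"
        then obtain v where "v \<in> nodes (rL r)" "v \<notin> interface r" "u = fst m v" by blast
        thus False using dang_tgt[OF wfS maS mm eS u] nif by blast
      qed
      ultimately show "u \<in> nodes ?C" unfolding C_simps by blast
    qed
    have labC: "(lab S e, length (src S e), length (tgt S e)) \<in> \<Sigma>" if e: "e \<in> edges ?C" for e
      using wfS e unfolding hyp_wf_def C_simps by blast
    show ?thesis unfolding hyp_wf_def
      using fin srcC tgtC labC unfolding C_simps by auto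
  qed
  have mKL: "morph (rK r) (rL r) ?f"
    using fimg ifL unfolding morph_def Ke by auto
  have ifC: "fst m ` interface r \<subseteq> nodes ?C"
  proof
    fix x assume "x \<in> fst m ` interface r"
    then obtain v where v: "v \<in> interface r" "x = fst m v" by blast
    have "x \<notin> fst m ` (nodes (rL r) - interface r)"
    proof
      assume "x \<in> fst m ` (nodes (rL r) - interface r)"
      then obtain w where w: "w \<in> nodes (rL r)" "w \<notin> interface r" "x = fst m w" by blast
      have "v \<in> nodes (rL r)" using v ifL by blast
      hence "v = w" using w v injn unfolding inj_on_def by blast
      thus False using v w by blast
    qed
    thus "x \<in> nodes ?C" using v ifL mLS unfolding C_simps by blast
  qed
  have mKC: "morph (rK r) ?C ?k"
    using fimg ifC unfolding morph_def Ke hcomp_def by auto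
  have mCS: "morph ?C S hid"
    unfolding morph_def hid_def C_simps by auto
  have poN: "set_pushout (nodes (rK r)) (nodes (rL r)) (nodes ?C) (nodes S) (fst ?f) (fst ?k) (fst m) (fst (hid::('w,'f,'w,'f) hmor))"
    unfolding set_pushout_def Let_def hid_def fst_conv
  proof (intro conjI ballI)
    show "fst m (fst ?f a) = id (fst ?k a)" for a by (simp add: hid_def hcomp_def)
    show "nodes S = fst m ` nodes (rL r) \<union> id ` nodes ?C"
      using mLS unfolding C_simps hid_def by auto
  next
    let ?R = "{(Inl (fst ?f a), Inr (fst ?k a)) | a. a \<in> nodes (rK r)}"
    fix x y assume x: "x \<in> nodes (rL r) <+> nodes ?C" and y: "y \<in> nodes (rL r) <+> nodes ?C"
    show "case_sum (fst m) (id) x = case_sum (fst m) (id) y \<longleftrightarrow> (x, y) \<in> (?R \<union> ?R\<inverse>)\<^sup>*"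
    proof
      assume "(x, y) \<in> (?R \<union> ?R\<inverse>)\<^sup>*"
      thus "case_sum (fst m) (id) x = case_sum (fst m) (id) y"
      proof (induction rule: rtrancl_induct)
        case (step y z)
        thus ?case by (auto simp: hid_def hcomp_def)
      qed simp
    next
      have cross: "(Inl l, Inr c) \<in> ?R" if "l \<in> nodes (rL r)" "c \<in> nodes ?C" "fst m l = c" for l c
      proof -
        have "l \<in> interface r" using that unfolding C_simps by blast
        hence "l \<in> fst ?f ` nodes (rK r)" unfolding fimg .
        then obtain a where a: "a \<in> nodes (rK r)" "l = fst ?f a" by (rule imageE)
        have "fst ?k a = c" using a that by (simp add: hcomp_def)
        thus ?thesis using a by blast
      qed
      assume eq: "case_sum (fst m) (id) x = case_sum (fst m) (id) y"
      show "(x, y) \<in> (?R \<union> ?R\<inverse>)\<^sup>*"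
      proof (cases x)
        case (Inl l)
        show ?thesis
        proof (cases y)
          case (Inl l')
          have "l \<in> nodes (rL r)" "l' \<in> nodes (rL r)" using x y \<open>x = Inl l\<close> Inl by auto
          moreover have "fst m l = fst m l'" using eq \<open>x = Inl l\<close> Inl by simp
          ultimately have "l = l'" using injn by (simp add: inj_on_eq_iff)
          thus ?thesis using \<open>x = Inl l\<close> Inl by simp
        next
          case (Inr c)
          have "l \<in> nodes (rL r)" "c \<in> nodes ?C" using x y \<open>x = Inl l\<close> Inr by auto
          moreover have "fst m l = c" using eq \<open>x = Inl l\<close> Inr by (simp add: hid_def)
          ultimately have "(Inl l, Inr c) \<in> ?R" by (rule cross)
          thus ?thesis unfolding \<open>x = Inl l\<close> Inr by (rule r_into_rtrancl[OF UnI1])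
        qed
      next
        case (Inr c)
        show ?thesis
        proof (cases y)
          case (Inl l)
          have "l \<in> nodes (rL r)" "c \<in> nodes ?C" using x y \<open>x = Inr c\<close> Inl by auto
          moreover have "fst m l = c" using eq \<open>x = Inr c\<close> Inl by (simp add: hid_def)
          ultimately have "(Inl l, Inr c) \<in> ?R" by (rule cross)
          thus ?thesis unfolding \<open>x = Inr c\<close> Inl by (rule r_into_rtrancl[OF UnI2[OF converseI]])
        next
          case (Inr c')
          thus ?thesis using eq \<open>x = Inr c\<close> by (simp add: hid_def)
        qed
      qed
    qed
  qed
  have poE: "set_pushout (edges (rK r)) (edges (rL r)) (edges ?C) (edges S) (snd ?f) (snd ?k) (snd m) (snd (hid::('w,'f,'w,'f) hmor))"
    unfolding Ke set_pushout_emptyA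
  proof
    show "edges S = snd m ` edges (rL r) \<union> snd (hid::('w,'f,'w,'f) hmor) ` edges ?C"
      using mLS unfolding C_simps hid_def by auto
    show "inj_on (case_sum (snd m) (snd (hid::('w,'f,'w,'f) hmor))) (edges (rL r) <+> edges ?C)"
      unfolding inj_on_def
    proof (intro ballI impI)
      fix x y assume x: "x \<in> edges (rL r) <+> edges ?C" and y: "y \<in> edges (rL r) <+> edges ?C"
        and eq: "case_sum (snd m) (snd (hid::('w,'f,'w,'f) hmor)) x = case_sum (snd m) (snd (hid::('w,'f,'w,'f) hmor)) y"
      show "x = y"
      proof (cases x)
        case (Inl l)
        show ?thesis
        proof (cases y)
          case (Inl l')
          have "l \<in> edges (rL r)" "l' \<in> edges (rL r)" using x y \<open>x = Inl l\<close> Inl by auto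
          moreover have "snd m l = snd m l'" using eq \<open>x = Inl l\<close> Inl by simp
          ultimately have "l = l'" using inje by (simp add: inj_on_eq_iff)
          thus ?thesis using \<open>x = Inl l\<close> Inl by simp
        next
          case (Inr c)
          have "l \<in> edges (rL r)" "c \<in> edges ?C" using x y \<open>x = Inl l\<close> Inr by auto
          moreover have "snd m l = c" using eq \<open>x = Inl l\<close> Inr by (simp add: hid_def)
          ultimately show ?thesis unfolding C_simps by blast
        qed
      next
        case (Inr c)
        show ?thesis
        proof (cases y)
          case (Inl l)
          have "l \<in> edges (rL r)" "c \<in> edges ?C" using x y \<open>x = Inr c\<close> Inl by auto
          moreover have "snd m l = c" using eq \<open>x = Inr c\<close> Inl by (simp add: hid_def)
          ultimately show ?thesis unfolding C_simps by blast
        next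
          case (Inr c')
          thus ?thesis using eq \<open>x = Inr c\<close> by (simp add: hid_def)
        qed
      qed
    qed
  qed
  have bd: "\<exists>b. morph (hsum (discrete_on (in_nodes S) :: ('w, 'f, 'l) hyp) (discrete_on (out_nodes S) :: ('w, 'f, 'l) hyp)) ?C b \<and>
     hm_eq_on (hsum (discrete_on (in_nodes S) :: ('w, 'f, 'l) hyp) (discrete_on (out_nodes S) :: ('w, 'f, 'l) hyp)) (hcomp b hid) (copair hid hid)"
  proof (intro exI conjI)
    let ?Bd = "hsum (discrete_on (in_nodes S) :: ('w, 'f, 'l) hyp) (discrete_on (out_nodes S) :: ('w, 'f, 'l) hyp)"
    have finS: "finite (edges S)" using wfS hyp_wf_def by blast
    have inC: "u \<in> nodes ?C" if u: "u \<in> in_nodes S \<or> u \<in> out_nodes S" for u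
    proof -
      have uS: "u \<in> nodes S" using u unfolding in_nodes_def out_nodes_def by blast
      have "u \<notin> fst m ` (nodes (rL r) - interface r)"
      proof
        assume "u \<in> fst m ` (nodes (rL r) - interface r)"
        then obtain v where v: "v \<in> nodes (rL r)" "v \<notin> interface r" "u = fst m v" by blast
        obtain e' i where e': "e' \<in> edges (rL r)" "i < length (tgt (rL r) e')" "tgt (rL r) e' ! i = v"
          using indeg_nonempty[OF nif(2)[OF v(1,2)]] by blast
        obtain e'' j where e'': "e'' \<in> edges (rL r)" "j < length (src (rL r) e'')" "src (rL r) e'' ! j = v"
          using outdeg_nonempty[OF nif(1)[OF v(1,2)]] by blast
        have s: "tgt S (snd m e') = map (fst m) (tgt (rL r) e')" "snd m e' \<in> edges S"
          "src S (snd m e'') = map (fst m) (src (rL r) e'')" "snd m e'' \<in> edges S"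
          using mm e'(1) e''(1) unfolding morph_def by blast+
        have "indeg S u \<noteq> 0"
          by (rule indeg_pos[OF finS s(2), of i]) (use s e' v in simp_all)
        moreover have "outdeg S u \<noteq> 0"
          by (rule outdeg_pos[OF finS s(4), of j]) (use s e'' v in simp_all)
        ultimately show False using u unfolding in_nodes_def out_nodes_def by auto
      qed
      thus ?thesis using uS unfolding C_simps by blast
    qed
    show "morph ?Bd ?C (copair hid hid)"
      unfolding morph_def hsum_def discrete_on_def copair_def hid_def using inC by auto
    show "hm_eq_on ?Bd (hcomp (copair hid hid) hid) (copair hid hid)"
      unfolding hm_eq_on_def hcomp_def hid_def copair_def by simp
  qed
  show ?thesis
    unfolding deriv_complement_def hpushout_def Let_def
    using wfC mKL mm mKC mCS poN poE bd by blast
qed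


lemma coeq_kern:
  assumes "set_coeq A B D g1 g2 e" "x \<in> B" "y \<in> B"
  shows "e x = e y \<longleftrightarrow> (x, y) \<in> ({(g1 a, g2 a) | a. a \<in> A} \<union> {(g1 a, g2 a) | a. a \<in> A}\<inverse>)\<^sup>*"
proof -
  have "\<forall>x\<in>B. \<forall>y\<in>B. (e x = e y \<longleftrightarrow> (x, y) \<in> ({(g1 a, g2 a) | a. a \<in> A} \<union> {(g1 a, g2 a) | a. a \<in> A}\<inverse>)\<^sup>*)"
    using assms(1) unfolding set_coeq_def Let_def by (elim conjE)
  thus ?thesis using assms(2,3) by blast
qed

lemma coeq_eq:
  assumes "set_coeq A B D g1 g2 e" "a \<in> A" "g1 a \<in> B" "g2 a \<in> B"
  shows "e (g1 a) = e (g2 a)"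
proof -
  let ?R = "{(g1 a, g2 a) | a. a \<in> A}"
  have "(g1 a, g2 a) \<in> ?R" using assms(2) by blast
  hence "(g1 a, g2 a) \<in> (?R \<union> ?R\<inverse>)\<^sup>*" by (intro r_into_rtrancl UnI1)
  thus ?thesis using coeq_kern[OF assms(1,3,4)] by simp
qed

lemma coeq_direct:
  assumes co: "set_coeq A B D g1 g2 e" and gB: "\<forall>a\<in>A. g1 a \<in> B \<and> g2 a \<in> B"
    and xy: "x \<in> B" "y \<in> B" "e x = e y" "x \<noteq> y"
    and only: "\<forall>z\<in>B. e z = e x \<longrightarrow> z = x \<or> z = y"
  shows "\<exists>a\<in>A. (g1 a = x \<and> g2 a = y) \<or> (g1 a = y \<and> g2 a = x)"
proof -
  let ?R = "{(g1 a, g2 a) | a. a \<in> A}"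
  have "(x,y) \<in> (?R \<union> ?R\<inverse>)\<^sup>*" using coeq_kern[OF co xy(1,2)] xy(3) by simp
  from rtr_escape[OF this, of "{x}"] xy(4) obtain a b where ab: "(a,b) \<in> ?R \<union> ?R\<inverse>" "a = x" "b \<noteq> x"
    by blast
  then obtain c where c: "c \<in> A" "(a = g1 c \<and> b = g2 c) \<or> (b = g1 c \<and> a = g2 c)" by blast
  have g12: "g1 c \<in> B" "g2 c \<in> B" using c(1) gB by auto
  have bB: "b \<in> B" using c(2) g12 by auto
  have "e (g1 c) = e (g2 c)" using coeq_eq[OF co c(1) g12] .
  hence "e b = e x" using c(2) ab(2) by auto
  hence "b = y" using only bB ab(3) by blast
  thus ?thesis using c ab(2) by blast
qed

lemma morph_comp: "morph A B f \<Longrightarrow> morph B C g \<Longrightarrow> morph A C (hcomp f g)"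
  unfolding morph_def hcomp_def by (auto simp: image_subset_iff)

lemma morph_inj1: "morph L1 (hsum L1 L2) inj1"
  unfolding morph_def inj1_def hsum_def by auto

lemma morph_inj2: "morph L2 (hsum L1 L2) inj2"
  unfolding morph_def inj2_def hsum_def by auto

lemma po_edges_disjoint:
  assumes po: "hpushout K L C S f m k c" and Ke: "edges K = {}"
    and e: "e \<in> edges L" "x \<in> edges C" "snd m e = snd c x"
  shows False
proof -
  have "set_pushout {} (edges L) (edges C) (edges S) (snd f) (snd k) (snd m) (snd c)"
    using po Ke unfolding hpushout_def by simp
  hence inj: "inj_on (case_sum (snd m) (snd c)) (edges L <+> edges C)"
    unfolding set_pushout_emptyA by blast
  have i1: "Inl e \<in> edges L <+> edges C" and i2: "Inr x \<in> edges L <+> edges C" using e by auto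
  have "case_sum (snd m) (snd c) (Inl e) = case_sum (snd m) (snd c) (Inr x)" using e(3) by simp
  from inj_onD[OF inj this i1 i2] show False by simp
qed

lemma po_nodes_interface:
  assumes po: "hpushout (rK r) (rL r) C S (copair (riL r) (roL r)) m k c"
    and v: "v \<in> nodes (rL r)" "x \<in> nodes C" "fst m v = fst c x"
  shows "v \<in> interface r"
proof -
  let ?f = "copair (riL r) (roL r)"
  let ?R = "{(Inl (fst ?f a), Inr (fst k a)) | a. a \<in> nodes (rK r)}"
  have sp: "set_pushout (nodes (rK r)) (nodes (rL r)) (nodes C) (nodes S) (fst ?f) (fst k) (fst m) (fst c)"
    using po unfolding hpushout_def by blast
  have kern: "\<forall>x\<in>nodes (rL r) <+> nodes C. \<forall>y\<in>nodes (rL r) <+> nodes C.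
     (case_sum (fst m) (fst c) x = case_sum (fst m) (fst c) y \<longleftrightarrow> (x, y) \<in> (?R \<union> ?R\<inverse>)\<^sup>*)"
    using sp unfolding set_pushout_def Let_def by (elim conjE)
  have i1: "Inl v \<in> nodes (rL r) <+> nodes C" and i2: "Inr x \<in> nodes (rL r) <+> nodes C" using v by auto
  have "(Inl v, Inr x) \<in> (?R \<union> ?R\<inverse>)\<^sup>*"
    using kern[rule_format, OF i1 i2] v(3) by simp
  from rtr_escape[OF this, of "{Inl v}"] obtain a b where ab: "(a,b) \<in> ?R \<union> ?R\<inverse>" "a = Inl v"
    by blast
  then obtain d where d: "d \<in> nodes (rK r)" "Inl v = Inl (fst ?f d)" by blast
  hence vd: "v = fst ?f d" by simp
  have "d \<in> nodes (rI r) <+> nodes (rO r)" using d(1) by (simp add: rK_def hsum_def)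
  thus ?thesis using vd unfolding interface_def copair_def by auto
qed

theorem mainTheorem4:
  fixes \<Sigma> :: "'l signature"
    and Rs :: "('v, 'e, 'l) rule set"
    and r1 r2 :: "('v, 'e, 'l) rule"
    and G :: "('g, 'ge, 'l) hyp"
    and g1 g2 :: "('g, 'ge, 'v + 'v, 'e + 'e) hmor"
    and S :: "('w, 'f, 'l) hyp"
    and eps :: "('v + 'v, 'e + 'e, 'w, 'f) hmor"
  assumes "left_connected_system \<Sigma> Rs"
    and "r1 \<in> Rs" and "r2 \<in> Rs"
    and "hyp_wf \<Sigma> G" and "hyp_wf \<Sigma> S"
    and "hcoeq G (hsum (rL r1) (rL r2)) S g1 g2 eps"
    and "mono (rL r1) (hcomp inj1 eps)"
    and "mono (rL r2) (hcomp inj2 eps)"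
    and "ma_cospan (discrete_on (in_nodes S) :: ('w, 'f, 'l) hyp) hid S hid
               (discrete_on (out_nodes S) :: ('w, 'f, 'l) hyp)"
  shows "parallel_pcp \<Sigma> r1 r2 S (hcomp inj1 eps) (hcomp inj2 eps) \<longleftrightarrow>
     ((\<forall>e1\<in>edges (rL r1). \<forall>e2\<in>edges (rL r2).
         \<not> glued_edges G g1 g2 (Inl e1) (Inr e2) \<and> \<not> glued_edges G g1 g2 (Inr e2) (Inl e1)) \<and>
      (\<forall>v1\<in>nodes (rL r1). \<forall>v2\<in>nodes (rL r2).
         (glued_nodes G g1 g2 (Inl v1) (Inr v2) \<or> glued_nodes G g1 g2 (Inr v2) (Inl v1)) \<longrightarrow>
         v1 \<in> interface r1 \<and> v2 \<in> interface r2))"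
proof -
  let ?H = "hsum (rL r1) (rL r2)"
  let ?m1 = "hcomp inj1 eps" and ?m2 = "hcomp inj2 eps"
  have lc1: "left_connected_rule \<Sigma> r1" and lc2: "left_connected_rule \<Sigma> r2"
    using assms(1-3) unfolding left_connected_system_def by auto
  have maS: "ma_hyp S" using ma_cospan_facts(5)[OF assms(9)] .
  have co: "morph G ?H g1" "morph G ?H g2" "morph ?H S eps"
    and coN: "set_coeq (nodes G) (nodes ?H) (nodes S) (fst g1) (fst g2) (fst eps)"
    and coE: "set_coeq (edges G) (edges ?H) (edges S) (snd g1) (snd g2) (snd eps)"
    using assms(6) unfolding hcoeq_def by auto
  have gN: "\<forall>a\<in>nodes G. fst g1 a \<in> nodes ?H \<and> fst g2 a \<in> nodes ?H"
    and gE: "\<forall>a\<in>edges G. snd g1 a \<in> edges ?H \<and> snd g2 a \<in> edges ?H"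
    using co(1,2) unfolding morph_def by auto
  have mm1: "morph (rL r1) S ?m1" by (rule morph_comp[OF morph_inj1 co(3)])
  have mm2: "morph (rL r2) S ?m2" by (rule morph_comp[OF morph_inj2 co(3)])
  have m1f: "fst ?m1 = fst eps \<circ> Inl" "snd ?m1 = snd eps \<circ> Inl"
    and m2f: "fst ?m2 = fst eps \<circ> Inr" "snd ?m2 = snd eps \<circ> Inr"
    by (simp_all add: hcomp_def inj1_def inj2_def)
  have injN1: "inj_on (fst eps \<circ> Inl) (nodes (rL r1))" and injE1: "inj_on (snd eps \<circ> Inl) (edges (rL r1))"
    using assms(7) m1f unfolding Defs.mono_def by auto
  have injN2: "inj_on (fst eps \<circ> Inr) (nodes (rL r2))" and injE2: "inj_on (snd eps \<circ> Inr) (edges (rL r2))"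
    using assms(8) m2f unfolding Defs.mono_def by auto
  have gluedN: "fst eps (Inl v1) = fst eps (Inr v2)"
    if gl: "glued_nodes G g1 g2 (Inl v1) (Inr v2) \<or> glued_nodes G g1 g2 (Inr v2) (Inl v1)" for v1 v2
  proof -
    obtain y where y: "y \<in> nodes G" "(fst g1 y = Inl v1 \<and> fst g2 y = Inr v2) \<or> (fst g1 y = Inr v2 \<and> fst g2 y = Inl v1)"
      using gl unfolding glued_nodes_def by blast
    have "fst eps (fst g1 y) = fst eps (fst g2 y)" using coeq_eq[OF coN y(1)] gN y(1) by blast
    thus ?thesis using y(2) by auto
  qed
  have gluedE: "snd eps (Inl e1) = snd eps (Inr e2)"
    if gl: "glued_edges G g1 g2 (Inl e1) (Inr e2) \<or> glued_edges G g1 g2 (Inr e2) (Inl e1)" for e1 e2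
  proof -
    obtain y where y: "y \<in> edges G" "(snd g1 y = Inl e1 \<and> snd g2 y = Inr e2) \<or> (snd g1 y = Inr e2 \<and> snd g2 y = Inl e1)"
      using gl unfolding glued_edges_def by blast
    have "snd eps (snd g1 y) = snd eps (snd g2 y)" using coeq_eq[OF coE y(1)] gE y(1) by blast
    thus ?thesis using y(2) by auto
  qed
  have HN: "nodes ?H = nodes (rL r1) <+> nodes (rL r2)" and HE: "edges ?H = edges (rL r1) <+> edges (rL r2)"
    by (simp_all add: hsum_def)
  have dirN: "glued_nodes G g1 g2 (Inl v1) (Inr v2) \<or> glued_nodes G g1 g2 (Inr v2) (Inl v1)"
    if v: "v1 \<in> nodes (rL r1)" "v2 \<in> nodes (rL r2)" "fst eps (Inl v1) = fst eps (Inr v2)" for v1 v2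
  proof -
    have only: "\<forall>z\<in>nodes ?H. fst eps z = fst eps (Inl v1) \<longrightarrow> z = Inl v1 \<or> z = Inr v2"
    proof (intro ballI impI)
      fix z assume z: "z \<in> nodes ?H" "fst eps z = fst eps (Inl v1)"
      show "z = Inl v1 \<or> z = Inr v2"
      proof (cases z)
        case (Inl a)
        hence "a \<in> nodes (rL r1)" using z(1) HN by auto
        moreover have "(fst eps \<circ> Inl) a = (fst eps \<circ> Inl) v1" using z(2) Inl by simp
        ultimately have "a = v1" using injN1 v(1) unfolding inj_on_def by blast
        thus ?thesis using Inl by simp
      next
        case (Inr b)
        hence "b \<in> nodes (rL r2)" using z(1) HN by auto
        moreover have "(fst eps \<circ> Inr) b = (fst eps \<circ> Inr) v2" using z(2) Inr v(3) by simp
        ultimately have "b = v2" using injN2 v(2) unfolding inj_on_def by blast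
        thus ?thesis using Inr by simp
      qed
    qed
    have "\<exists>a\<in>nodes G. (fst g1 a = Inl v1 \<and> fst g2 a = Inr v2) \<or> (fst g1 a = Inr v2 \<and> fst g2 a = Inl v1)"
      by (rule coeq_direct[OF coN gN _ _ v(3) _ only]) (use v HN in auto)
    thus ?thesis unfolding glued_nodes_def by blast
  qed
  have dirE: "glued_edges G g1 g2 (Inl v1) (Inr v2) \<or> glued_edges G g1 g2 (Inr v2) (Inl v1)"
    if v: "v1 \<in> edges (rL r1)" "v2 \<in> edges (rL r2)" "snd eps (Inl v1) = snd eps (Inr v2)" for v1 v2
  proof -
    have only: "\<forall>z\<in>edges ?H. snd eps z = snd eps (Inl v1) \<longrightarrow> z = Inl v1 \<or> z = Inr v2"
    proof (intro ballI impI)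
      fix z assume z: "z \<in> edges ?H" "snd eps z = snd eps (Inl v1)"
      show "z = Inl v1 \<or> z = Inr v2"
      proof (cases z)
        case (Inl a)
        hence "a \<in> edges (rL r1)" using z(1) HE by auto
        moreover have "(snd eps \<circ> Inl) a = (snd eps \<circ> Inl) v1" using z(2) Inl by simp
        ultimately have "a = v1" using injE1 v(1) unfolding inj_on_def by blast
        thus ?thesis using Inl by simp
      next
        case (Inr b)
        hence "b \<in> edges (rL r2)" using z(1) HE by auto
        moreover have "(snd eps \<circ> Inr) b = (snd eps \<circ> Inr) v2" using z(2) Inr v(3) by simp
        ultimately have "b = v2" using injE2 v(2) unfolding inj_on_def by blast
        thus ?thesis using Inr by simp
      qed
    qed
    have "\<exists>a\<in>edges G. (snd g1 a = Inl v1 \<and> snd g2 a = Inr v2) \<or> (snd g1 a = Inr v2 \<and> snd g2 a = Inl v1)"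
      by (rule coeq_direct[OF coE gE _ _ v(3) _ only]) (use v HE in auto)
    thus ?thesis unfolding glued_edges_def by blast
  qed
  have Ke1: "edges (rK r1) = {}" and Ke2: "edges (rK r2) = {}"
    using lcr_facts(1,2)[OF lc1] lcr_facts(1,2)[OF lc2] by (auto simp: rK_def hsum_def discrete_def)
  show ?thesis
  proof
    assume "parallel_pcp \<Sigma> r1 r2 S ?m1 ?m2"
    then obtain C1 k1 c1 C2 k2 c2 h1 h2 where
      dc1: "deriv_complement \<Sigma> r1 S ?m1 C1 k1 c1" and dc2: "deriv_complement \<Sigma> r2 S ?m2 C2 k2 c2"
      and h1: "morph (rL r1) C2 h1" "hm_eq_on (rL r1) (hcomp h1 c2) ?m1"
      and h2: "morph (rL r2) C1 h2" "hm_eq_on (rL r2) (hcomp h2 c1) ?m2"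
      unfolding parallel_pcp_def by blast
    have po1: "hpushout (rK r1) (rL r1) C1 S (copair (riL r1) (roL r1)) ?m1 k1 c1"
      using dc1 unfolding deriv_complement_def by blast
    have po2: "hpushout (rK r2) (rL r2) C2 S (copair (riL r2) (roL r2)) ?m2 k2 c2"
      using dc2 unfolding deriv_complement_def by blast
    show "(\<forall>e1\<in>edges (rL r1). \<forall>e2\<in>edges (rL r2).
         \<not> glued_edges G g1 g2 (Inl e1) (Inr e2) \<and> \<not> glued_edges G g1 g2 (Inr e2) (Inl e1)) \<and>
      (\<forall>v1\<in>nodes (rL r1). \<forall>v2\<in>nodes (rL r2).
         (glued_nodes G g1 g2 (Inl v1) (Inr v2) \<or> glued_nodes G g1 g2 (Inr v2) (Inl v1)) \<longrightarrow>
         v1 \<in> interface r1 \<and> v2 \<in> interface r2)"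
    proof (intro conjI ballI impI)
      fix e1 e2 assume e: "e1 \<in> edges (rL r1)" "e2 \<in> edges (rL r2)"
      have False if gl: "glued_edges G g1 g2 (Inl e1) (Inr e2) \<or> glued_edges G g1 g2 (Inr e2) (Inl e1)"
      proof -
        have eq: "snd eps (Inl e1) = snd eps (Inr e2)" using gluedE[OF gl] .
        have "snd h1 e1 \<in> edges C2" using h1(1) e(1) unfolding morph_def by blast
        moreover have "snd ?m2 e2 = snd c2 (snd h1 e1)"
          using h1(2) e(1) eq unfolding hm_eq_on_def hcomp_def inj1_def inj2_def by simp
        ultimately show False using po_edges_disjoint[OF po2 Ke2 e(2)] by blast
      qed
      thus "\<not> glued_edges G g1 g2 (Inl e1) (Inr e2)" "\<not> glued_edges G g1 g2 (Inr e2) (Inl e1)" by blast+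
    next
      fix v1 v2 assume v: "v1 \<in> nodes (rL r1)" "v2 \<in> nodes (rL r2)"
        and gl: "glued_nodes G g1 g2 (Inl v1) (Inr v2) \<or> glued_nodes G g1 g2 (Inr v2) (Inl v1)"
      have eq: "fst eps (Inl v1) = fst eps (Inr v2)" using gluedN[OF gl] .
      have "fst h1 v1 \<in> nodes C2" using h1(1) v(1) unfolding morph_def by blast
      moreover have "fst ?m2 v2 = fst c2 (fst h1 v1)"
        using h1(2) v(1) eq unfolding hm_eq_on_def hcomp_def inj1_def inj2_def by simp
      ultimately show "v2 \<in> interface r2" using po_nodes_interface[OF po2 v(2)] by blast
      have "fst h2 v2 \<in> nodes C1" using h2(1) v(2) unfolding morph_def by blast
      moreover have "fst ?m1 v1 = fst c1 (fst h2 v2)"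
        using h2(2) v(2) eq unfolding hm_eq_on_def hcomp_def inj1_def inj2_def by simp
      ultimately show "v1 \<in> interface r1" using po_nodes_interface[OF po1 v(1)] by blast
    qed
  next
    assume cond: "(\<forall>e1\<in>edges (rL r1). \<forall>e2\<in>edges (rL r2).
         \<not> glued_edges G g1 g2 (Inl e1) (Inr e2) \<and> \<not> glued_edges G g1 g2 (Inr e2) (Inl e1)) \<and>
      (\<forall>v1\<in>nodes (rL r1). \<forall>v2\<in>nodes (rL r2).
         (glued_nodes G g1 g2 (Inl v1) (Inr v2) \<or> glued_nodes G g1 g2 (Inr v2) (Inl v1)) \<longrightarrow>
         v1 \<in> interface r1 \<and> v2 \<in> interface r2)"
    have d1: "deriv_complement \<Sigma> r1 S ?m1 (Cc r1 S ?m1) (hcomp (copair (riL r1) (roL r1)) ?m1) hid"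
      by (rule complement[OF lc1 assms(5) maS mm1 assms(7)])
    have d2: "deriv_complement \<Sigma> r2 S ?m2 (Cc r2 S ?m2) (hcomp (copair (riL r2) (roL r2)) ?m2) hid"
      by (rule complement[OF lc2 assms(5) maS mm2 assms(8)])
    have nE: "snd eps (Inl e1) \<noteq> snd eps (Inr e2)" if "e1 \<in> edges (rL r1)" "e2 \<in> edges (rL r2)" for e1 e2
      using dirE[OF that] cond that by blast
    have nN: "v1 \<in> interface r1 \<and> v2 \<in> interface r2"
      if "v1 \<in> nodes (rL r1)" "v2 \<in> nodes (rL r2)" "fst eps (Inl v1) = fst eps (Inr v2)" for v1 v2
      using dirN[OF that] cond that(1,2) by blast
    have h1: "morph (rL r1) (Cc r2 S ?m2) ?m1"
    proof -
      have a: "fst ?m1 v \<in> nodes (Cc r2 S ?m2)" if "v \<in> nodes (rL r1)" for v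
      proof -
        have "fst ?m1 v \<in> nodes S" using mm1 that unfolding morph_def by blast
        moreover have "fst ?m1 v \<notin> fst ?m2 ` (nodes (rL r2) - interface r2)"
          using nN[OF that] m1f m2f by auto
        ultimately show ?thesis by (simp add: Cc_def)
      qed
      have b: "snd ?m1 e \<in> edges (Cc r2 S ?m2)" if "e \<in> edges (rL r1)" for e
      proof -
        have "snd ?m1 e \<in> edges S" using mm1 that unfolding morph_def by blast
        moreover have "snd ?m1 e \<notin> snd ?m2 ` edges (rL r2)"
          using nE[OF that] m1f m2f by auto
        ultimately show ?thesis by (simp add: Cc_def)
      qed
      show ?thesis using a b mm1 unfolding morph_def by (simp add: Cc_def image_subset_iff)
    qed
    have h2: "morph (rL r2) (Cc r1 S ?m1) ?m2"
    proof -
      have a: "fst ?m2 v \<in> nodes (Cc r1 S ?m1)" if "v \<in> nodes (rL r2)" for v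
      proof -
        have "fst ?m2 v \<in> nodes S" using mm2 that unfolding morph_def by blast
        moreover have "fst ?m2 v \<notin> fst ?m1 ` (nodes (rL r1) - interface r1)"
          using nN that m1f m2f by fastforce
        ultimately show ?thesis by (simp add: Cc_def)
      qed
      have b: "snd ?m2 e \<in> edges (Cc r1 S ?m1)" if "e \<in> edges (rL r2)" for e
      proof -
        have "snd ?m2 e \<in> edges S" using mm2 that unfolding morph_def by blast
        moreover have "snd ?m2 e \<notin> snd ?m1 ` edges (rL r1)"
          using nE that m1f m2f by fastforce
        ultimately show ?thesis by (simp add: Cc_def)
      qed
      show ?thesis using a b mm2 unfolding morph_def by (simp add: Cc_def image_subset_iff)
    qed
    have e1: "hm_eq_on (rL r1) (hcomp ?m1 hid) ?m1" and e2: "hm_eq_on (rL r2) (hcomp ?m2 hid) ?m2"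
      by (simp_all add: hm_eq_on_def hcomp_def hid_def)
    show "parallel_pcp \<Sigma> r1 r2 S ?m1 ?m2"
      unfolding parallel_pcp_def using d1 d2 h1 h2 e1 e2 by blast
  qed
qed

end
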